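(* Let $\{z_n\}_{n \geq 1}$ be a sequence in $\mathbb{C} \setminus\{i\}$. Then $\prod_{n \geq 1} z_n$ converges absolutely if and only if $\prod_{n \geq 1} T(z_n)$ converges absolutely.
   Context: $T(z) = i\frac{1-iz}{1+iz}$ (defined for $z\neq i$). A product $\prod_{n\ge1} w_n$ is said to converge absolutely if $\sum_{n\ge1}|1-w_n|<\infty$. *)

theory Defs
  imports "HOL-Analysis.Analysis"
begin

definition T :: "complex \<Rightarrow> complex" where
  "T z = \<i> * (1 - \<i> * z) / (1 + \<i> * z)"

text \<open>The product over n \<ge> 1 of w n converges absolutely iff the sum over n \<ge> 1 of |1 - w n| is finite.\<close>
definition abs_conv_prod :: "(nat \<Rightarrow> complex) \<Rightarrow> bool" where
  "abs_conv_prod w \<longleftrightarrow> summable (\<lambda>n. norm (1 - w (Suc n)))"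

end

theory Submission
  imports Defs
begin

lemma T_id1:
  assumes "z \<noteq> \<i>"
  shows "1 - T z = (1 - \<i>) * (1 - z) / (1 + \<i> * z)"
proof -
  have h: "1 + \<i> * z \<noteq> 0"
  proof
    assume "1 + \<i> * z = 0"
    then have "\<i> * (1 + \<i> * z) = 0" by simp
    then have "z = \<i>" by (simp add: algebra_simps)
    with assms show False by simp
  qed
  show ?thesis using h unfolding T_def by (simp add: field_simps algebra_simps)
qed

lemma T_id2:
  assumes "z \<noteq> \<i>"
  shows "(1 + \<i> * z) * (\<i> * T z - 1) = -2"
proof -
  have h: "1 + \<i> * z \<noteq> 0"
  proof
    assume "1 + \<i> * z = 0"
    then have "\<i> * (1 + \<i> * z) = 0" by simp
    then have "z = \<i>" by (simp add: algebra_simps)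
    with assms show False by simp
  qed
  show ?thesis using h unfolding T_def by (simp add: field_simps algebra_simps)
qed

lemma norm_1mi: "norm (1 - \<i>) = sqrt 2"
  by (simp add: cmod_def)

theorem lemma4p2:
  fixes z :: "nat \<Rightarrow> complex"
  assumes "\<forall>n\<ge>1. z n \<noteq> \<i>"
  shows "abs_conv_prod z \<longleftrightarrow> abs_conv_prod (\<lambda>n. T (z n))"
proof
  assume a: "abs_conv_prod z"
  then have s: "summable (\<lambda>n. norm (1 - z (Suc n)))" by (simp add: abs_conv_prod_def)
  have "(\<lambda>n. norm (1 - z (Suc n))) \<longlonglongrightarrow> 0" using summable_LIMSEQ_zero[OF s] .
  then have "(\<lambda>n. 1 - z (Suc n)) \<longlonglongrightarrow> 0" by (simp add: tendsto_norm_zero_iff)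
  then have "(\<lambda>n. 1 - (1 - z (Suc n))) \<longlonglongrightarrow> 1 - 0" by (intro tendsto_intros)
  then have "(\<lambda>n. z (Suc n)) \<longlonglongrightarrow> 1" by simp
  then have "(\<lambda>n. norm (1 + \<i> * z (Suc n))) \<longlonglongrightarrow> norm (1 + \<i> * 1)" by (intro tendsto_intros)
  moreover have "norm (1 + \<i> * 1) > (1::real)" by (simp add: cmod_def)
  ultimately have ev: "eventually (\<lambda>n. norm (1 + \<i> * z (Suc n)) > 1) sequentially"
    using order_tendstoD(1) by blast
  have "eventually (\<lambda>n. norm (norm (1 - T (z (Suc n)))) \<le> sqrt 2 * norm (1 - z (Suc n))) sequentially"
    using ev
  proof eventually_elim
    case (elim n)
    have zi: "z (Suc n) \<noteq> \<i>" using assms by simp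
    have "norm (1 - T (z (Suc n))) = sqrt 2 * norm (1 - z (Suc n)) / norm (1 + \<i> * z (Suc n))"
      using T_id1[OF zi] by (simp add: norm_mult norm_divide norm_1mi)
    also have "\<dots> \<le> sqrt 2 * norm (1 - z (Suc n))"
      proof -
      have "0 \<le> sqrt 2 * norm (1 - z (Suc n))" by simp
      moreover have "sqrt 2 * norm (1 - z (Suc n)) * 1 \<le> sqrt 2 * norm (1 - z (Suc n)) * norm (1 + \<i> * z (Suc n))"
        using elim by (intro mult_left_mono) auto
      ultimately show ?thesis using elim by (simp add: divide_le_eq)
    qed
    finally show ?case by simp
  qed
  then have "summable (\<lambda>n. norm (1 - T (z (Suc n))))"
    by (rule summable_comparison_test_ev) (intro summable_mult s)
  then show "abs_conv_prod (\<lambda>n. T (z n))" by (simp add: abs_conv_prod_def)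
next
  assume a: "abs_conv_prod (\<lambda>n. T (z n))"
  then have s: "summable (\<lambda>n. norm (1 - T (z (Suc n))))" by (simp add: abs_conv_prod_def)
  have "(\<lambda>n. norm (1 - T (z (Suc n)))) \<longlonglongrightarrow> 0" using summable_LIMSEQ_zero[OF s] .
  then have "(\<lambda>n. 1 - T (z (Suc n))) \<longlonglongrightarrow> 0" by (simp add: tendsto_norm_zero_iff)
  then have "(\<lambda>n. 1 - (1 - T (z (Suc n)))) \<longlonglongrightarrow> 1 - 0" by (intro tendsto_intros)
  then have "(\<lambda>n. T (z (Suc n))) \<longlonglongrightarrow> 1" by simp
  then have "(\<lambda>n. norm (\<i> * T (z (Suc n)) - 1)) \<longlonglongrightarrow> norm (\<i> * 1 - 1)" by (intro tendsto_intros)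
  moreover have "norm (\<i> * 1 - 1) > (1::real)" by (simp add: cmod_def)
  ultimately have ev: "eventually (\<lambda>n. norm (\<i> * T (z (Suc n)) - 1) > 1) sequentially"
    using order_tendstoD(1) by blast
  have "eventually (\<lambda>n. norm (norm (1 - z (Suc n))) \<le> sqrt 2 * norm (1 - T (z (Suc n)))) sequentially"
    using ev
  proof eventually_elim
    case (elim n)
    have zi: "z (Suc n) \<noteq> \<i>" using assms by simp
    have n2: "norm (1 + \<i> * z (Suc n)) * norm (\<i> * T (z (Suc n)) - 1) = 2"
      using arg_cong[OF T_id2[OF zi], of norm] by (simp add: norm_mult)
    have b: "norm (1 + \<i> * z (Suc n)) \<le> 2"
    proof -
      have "norm (1 + \<i> * z (Suc n)) * 1 \<le> norm (1 + \<i> * z (Suc n)) * norm (\<i> * T (z (Suc n)) - 1)"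
        using elim by (intro mult_left_mono) auto
      then show ?thesis using n2 by simp
    qed
    have zi2: "1 + \<i> * z (Suc n) \<noteq> 0" using n2 by auto
    have e: "1 - z (Suc n) = (1 - T (z (Suc n))) * (1 + \<i> * z (Suc n)) / (1 - \<i>)"
      using T_id1[OF zi] zi2 by (simp add: field_simps)
    have "norm (1 - z (Suc n)) = norm (1 - T (z (Suc n))) * norm (1 + \<i> * z (Suc n)) / sqrt 2"
      using e by (simp add: norm_mult norm_divide norm_1mi)
    also have "\<dots> \<le> norm (1 - T (z (Suc n))) * 2 / sqrt 2"
      using b by (intro divide_right_mono mult_left_mono) auto
    also have "\<dots> = sqrt 2 * norm (1 - T (z (Suc n)))"
      by (simp add: field_simps real_sqrt_mult[symmetric])
    finally show ?case by simp
  qed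
  then have "summable (\<lambda>n. norm (1 - z (Suc n)))"
    by (rule summable_comparison_test_ev) (intro summable_mult s)
  then show "abs_conv_prod z" by (simp add: abs_conv_prod_def)
qed

end
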